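(* Let $A\in\Theta_\triangle(n,r)$, write $A=\jmath_\triangle(\lambda,y_A,\mu)$ with $\lambda,\mu\in\Lambda_\triangle(n,r)$ and $y_A\in\mathcal D_{\lambda,\mu}$, and let $y_A^+$ be the unique longest element of the double coset $\mathfrak S_\lambda y_A\mathfrak S_\mu$ and $w_{0,\mu}$ the longest element of $\mathfrak S_\mu$. Then $\ell(y_A^+)=d_A+\ell(w_{0,\mu})$, where $\mu=\mathrm{co}(A)$ and $d_A=\sum_{1\le i\le n,\,i\ge k,\,j<l}a_{i,j}a_{k,l}$.
   Context: $n\ge2$. $\Theta_\triangle(n)$: matrices $A=(a_{i,j})_{i,j\in\mathbb Z}$ with $a_{i,j}\in\mathbb N$, $a_{i+n,j+n}=a_{i,j}$, finitely many nonzero entries per row and column; $\sigma(A)=\sum_{1\le i\le n,j\in\mathbb Z}a_{i,j}$; $\Theta_\triangle(n,r)=\{A:\sigma(A)=r\}$; $\mathrm{co}(A)=(\sum_ia_{i,j})_{j}$. $\Lambda_\triangle(n,r)$ is the set of $n$-periodic sequences $(\lambda_i)_{i\in\mathbb Z}$ of nonnegative integers with $\sum_{i=1}^n\lambda_i=r$. $\mathfrak S_{\triangle,r}$ is the group of permutations $w$ of $\mathbb Z$ with $w(i+r)=w(i)+r$; for $1\le i\le r$, $s_i$ swaps $j$ and $j+1$ for all $j\equiv i\pmod r$ and fixes other integers; $W_r=\langle s_1,\dots,s_r\rangle$ is a Coxeter group with length function $\ell$; with $\rho:j\mapsto j+1$, each $w\in\mathfrak S_{\triangle,r}$ is uniquely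 $\rho^ax$ ($x\in W_r$) and $\ell(\rho^ax):=\ell(x)$. For $\lambda\in\Lambda_\triangle(n,r)$, $\mathfrak S_\lambda$ is the standard Young subgroup $\mathfrak S_{(\lambda_1,\ldots,\lambda_n)}$ of $\mathfrak S_r=\langle s_1,\dots,s_{r-1}\rangle$; $\mathcal D_\lambda=\{d\in\mathfrak S_{\triangle,r}:\ell(wd)=\ell(w)+\ell(d)\ \forall w\in\mathfrak S_\lambda\}$, $\mathcal D_{\lambda,\mu}=\mathcal D_\lambda\cap\mathcal D_\mu^{-1}$. The bijection $\jmath_\triangle$ sends $(\lambda,d,\mu)$ with $d\in\mathcal D_{\lambda,\mu}$ to $A=(|R^\lambda_k\cap dR^\mu_l|)_{k,l\in\mathbb Z}\in\Theta_\triangle(n,r)$, where $R^\nu_{i+kn}=\{kr+\nu_1+\cdots+\nu_{i-1}+1,\ldots,kr+\nu_1+\cdots+\nu_i\}$ for $1\le i\le n$, $k\in\mathbb Z$. *)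

theory Defs
  imports Main
begin

type_synonym amat = "int \<Rightarrow> int \<Rightarrow> nat"

definition Theta :: "nat \<Rightarrow> amat set" where
  "Theta n = {A. (\<forall>i j. A (i + int n) (j + int n) = A i j)
                 \<and> (\<forall>i. finite {j. A i j \<noteq> 0}) \<and> (\<forall>j. finite {i. A i j \<noteq> 0})}"

definition sigma :: "nat \<Rightarrow> amat \<Rightarrow> nat" where
  "sigma n A = (\<Sum>(i, j)\<in>{(i, j). 1 \<le> i \<and> i \<le> int n \<and> A i j \<noteq> 0}. A i j)"

definition Theta_r :: "nat \<Rightarrow> nat \<Rightarrow> amat set" where
  "Theta_r n r = {A \<in> Theta n. sigma n A = r}"

definition co :: "amat \<Rightarrow> int \<Rightarrow> nat" where
  "co A j = (\<Sum>i\<in>{i. A i j \<noteq> 0}. A i j)"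

definition dA :: "nat \<Rightarrow> amat \<Rightarrow> nat" where
  "dA n A = (\<Sum>(i, j, k, l)\<in>{(i, j, k, l). 1 \<le> i \<and> i \<le> int n \<and> k \<le> i \<and> j < l
                                    \<and> A i j \<noteq> 0 \<and> A k l \<noteq> 0}. A i j * A k l)"

definition Lambda :: "nat \<Rightarrow> nat \<Rightarrow> (int \<Rightarrow> nat) set" where
  "Lambda n r = {lam. (\<forall>i. lam (i + int n) = lam i) \<and> (\<Sum>i=1..int n. lam i) = r}"

definition Rset :: "nat \<Rightarrow> nat \<Rightarrow> (int \<Rightarrow> nat) \<Rightarrow> int \<Rightarrow> int set" where
  "Rset n r nu m =
     (let i = (m - 1) mod int n + 1; k = (m - 1) div int n
      in {k * int r + (\<Sum>t=1..i-1. int (nu t)) + 1 .. k * int r + (\<Sum>t=1..i. int (nu t))})"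

definition aff_sym :: "nat \<Rightarrow> (int \<Rightarrow> int) set" where
  "aff_sym r = {w. bij w \<and> (\<forall>i. w (i + int r) = w i + int r)}"

definition sgen :: "nat \<Rightarrow> nat \<Rightarrow> int \<Rightarrow> int" where
  "sgen r i j = (if j mod int r = int i mod int r then j + 1
                 else if j mod int r = (int i + 1) mod int r then j - 1 else j)"

definition rho_pow :: "int \<Rightarrow> int \<Rightarrow> int" where
  "rho_pow a = (\<lambda>j. j + a)"

definition len :: "nat \<Rightarrow> (int \<Rightarrow> int) \<Rightarrow> nat" where
  "len r w = (LEAST k. \<exists>a ws. length ws = k \<and> set ws \<subseteq> {1..r}
                         \<and> w = rho_pow a \<circ> foldr (\<circ>) (map (sgen r) ws) id)"

text \<open>standard Young subgroup S_lambda of S_r, viewed inside the affine group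
  (the periodic permutations stabilising every block R^lambda_i)\<close>
definition Young :: "nat \<Rightarrow> nat \<Rightarrow> (int \<Rightarrow> nat) \<Rightarrow> (int \<Rightarrow> int) set" where
  "Young n r lam = {w \<in> aff_sym r. \<forall>m. w ` Rset n r lam m = Rset n r lam m}"

definition Dmin :: "nat \<Rightarrow> nat \<Rightarrow> (int \<Rightarrow> nat) \<Rightarrow> (int \<Rightarrow> int) set" where
  "Dmin n r lam = {d \<in> aff_sym r. \<forall>w \<in> Young n r lam. len r (w \<circ> d) = len r w + len r d}"

definition Dpair :: "nat \<Rightarrow> nat \<Rightarrow> (int \<Rightarrow> nat) \<Rightarrow> (int \<Rightarrow> nat) \<Rightarrow> (int \<Rightarrow> int) set" where
  "Dpair n r lam mu = Dmin n r lam \<inter> (\<lambda>d. inv d) ` Dmin n r mu"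

definition jmath :: "nat \<Rightarrow> nat \<Rightarrow> (int \<Rightarrow> nat) \<Rightarrow> (int \<Rightarrow> int) \<Rightarrow> (int \<Rightarrow> nat) \<Rightarrow> amat" where
  "jmath n r lam d mu = (\<lambda>k l. card (Rset n r lam k \<inter> d ` Rset n r mu l))"

definition dcoset :: "nat \<Rightarrow> nat \<Rightarrow> (int \<Rightarrow> nat) \<Rightarrow> (int \<Rightarrow> int) \<Rightarrow> (int \<Rightarrow> nat) \<Rightarrow> (int \<Rightarrow> int) set" where
  "dcoset n r lam y mu = {w \<circ> y \<circ> u | w u. w \<in> Young n r lam \<and> u \<in> Young n r mu}"

definition longest_in :: "nat \<Rightarrow> (int \<Rightarrow> int) set \<Rightarrow> (int \<Rightarrow> int) \<Rightarrow> bool" where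
  "longest_in r S x \<longleftrightarrow> x \<in> S \<and> (\<forall>z\<in>S. len r z \<le> len r x)"

end

theory Submission imports Defs begin

lemma int_periodic:
  fixes f :: "int \<Rightarrow> 'a"
  assumes "\<And>x. f (x + p) = f x"
  shows "f (x + t * p) = f x"
proof -
  have pos: "f (x + int k * p) = f x" for k x
  proof (induction k)
    case (Suc k)
    have "f (x + int (Suc k) * p) = f ((x + int k * p) + p)" by (simp add: algebra_simps)
    also have "\<dots> = f x" using assms Suc by simp
    finally show ?case .
  qed simp
  show ?thesis
  proof (cases "t \<ge> 0")
    case True then show ?thesis using pos[where k="nat t"] by simp
  next
    case False
    have "f ((x + t*p) + int (nat (-t)) * p) = f (x + t*p)" by (rule pos)
    then show ?thesis using False by (simp add: algebra_simps)
  qed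
qed

lemma int_equivariant:
  fixes f :: "int \<Rightarrow> int"
  assumes "\<And>x. f (x + p) = f x + p"
  shows "f (x + t * p) = f x + t * p"
proof -
  have "(\<lambda>x. f x - x) (x + t*p) = (\<lambda>x. f x - x) x"
    by (rule int_periodic) (simp add: assms)
  then show ?thesis by simp
qed

lemma divmod_triv:
  fixes q b k :: int
  assumes "0 \<le> b" "b < k"
  shows "(q*k + b) div k = q" "(q*k + b) mod k = b"
  using assms by (simp_all add: div_pos_pos_trivial)

locale blocks =
  fixes n r :: nat and nu :: "int \<Rightarrow> nat"
  assumes n1: "n \<ge> 1" and r1: "r \<ge> 1" and nuL: "nu \<in> Lambda n r"
begin

definition P :: "int \<Rightarrow> int" where "P i = (\<Sum>t=1..i. int (nu t))"
definition F :: "int \<Rightarrow> int" where "F m = (m div int n) * int r + P (m mod int n)"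

lemma P0[simp]: "P 0 = 0" by (simp add: P_def)

lemma P_succ: "0 \<le> i \<Longrightarrow> P (i+1) = P i + int (nu (i+1))"
proof -
  assume "0 \<le> i"
  then have "{1..i+1} = insert (i+1) {1..i}" by auto
  then show ?thesis by (simp add: P_def)
qed

lemma P_n: "P (int n) = int r"
proof -
  have "(\<Sum>i=1..int n. nu i) = r" using nuL by (simp add: Lambda_def)
  then have "int (\<Sum>i=1..int n. nu i) = int r" by simp
  then show ?thesis by (simp add: P_def)
qed

lemma P_mono: "0 \<le> i \<Longrightarrow> i \<le> j \<Longrightarrow> P i \<le> P j"
  unfolding P_def by (rule sum_mono2) auto

lemma nu_per: "nu (x + t * int n) = nu x"
  by (rule int_periodic) (use nuL in \<open>simp add: Lambda_def\<close>)

lemma F_t: "F (m + t * int n) = F m + t * int r"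
  using n1 by (simp add: F_def algebra_simps)

lemma F0: "F 0 = 0" by (simp add: F_def)
lemma Fn: "F (int n) = int r" using n1 by (simp add: F_def)

lemma F_step: "F m \<le> F (m+1)"
proof -
  define q i where "q = m div int n" and "i = m mod int n"
  have m: "m = q * int n + i" by (simp add: q_def i_def)
  have i0: "0 \<le> i" "i < int n" using n1 by (auto simp: i_def)
  show ?thesis
  proof (cases "i + 1 < int n")
    case True
    have "(m+1) div int n = q" "(m+1) mod int n = i+1"
      using divmod_triv[of "i+1" "int n" q] True i0 by (simp_all add: m add.assoc)
    then show ?thesis using P_mono[of i "i+1"] i0 by (simp add: F_def q_def[symmetric] i_def[symmetric])
  next
    case False
    then have ii: "i + 1 = int n" using i0 by simp
    have "m + 1 = (q+1) * int n + 0" using m ii by (simp add: algebra_simps)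
    then have "(m+1) div int n = q+1" "(m+1) mod int n = 0"
      using divmod_triv[of 0 "int n" "q+1"] n1 by simp_all
    moreover have "P i \<le> P (int n)" using P_mono[of i "int n"] i0 by simp
    ultimately show ?thesis using P_n by (simp add: F_def q_def[symmetric] i_def[symmetric] algebra_simps)
  qed
qed

lemma F_mono: "a \<le> b \<Longrightarrow> F a \<le> F b"
proof -
  assume "a \<le> b"
  have "F a \<le> F (a + int k)" for k
  proof (induction k)
    case (Suc k)
    have e: "a + int (Suc k) = (a + int k) + 1" by simp
    show ?case unfolding e using Suc F_step[of "a + int k"] by linarith
  qed simp
  from this[of "nat (b-a)"] \<open>a \<le> b\<close> show ?thesis by simp
qed

lemma F_gap: "F m \<le> F (m-1) + int r"
  using F_mono[of m "m - 1 + int n"] F_t[of "m-1" 1] n1 by simp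

lemma Rset_eq: "Rset n r nu m = {F (m-1) + 1 .. F m}"
proof -
  define k j where "k = (m-1) div int n" and "j = (m-1) mod int n"
  have j0: "0 \<le> j" "j < int n" using n1 by (auto simp: j_def)
  have m: "m - 1 = k * int n + j" by (simp add: k_def j_def)
  have A: "F (m-1) = k * int r + P j" by (simp add: F_def k_def j_def)
  have B: "F m = k * int r + P (j+1)"
  proof (cases "j + 1 < int n")
    case True
    have "m = k * int n + (j+1)" using m by simp
    then have "m div int n = k" "m mod int n = j+1"
      using divmod_triv[of "j+1" "int n" k] True j0 by simp_all
    then show ?thesis by (simp add: F_def)
  next
    case False
    then have jj: "j + 1 = int n" using j0 by simp
    have "m = (k+1) * int n + 0" using m jj by (simp add: algebra_simps)
    then have "m div int n = k+1" "m mod int n = 0"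
      using divmod_triv[of 0 "int n" "k+1"] n1 by simp_all
    then show ?thesis using jj P_n by (simp add: F_def algebra_simps)
  qed
  have "Rset n r nu m = {k * int r + P j + 1 .. k * int r + P (j+1)}"
    by (simp add: Rset_def Let_def P_def k_def[symmetric] j_def[symmetric])
  then show ?thesis using A B by simp
qed

lemma blk_ex: "\<exists>m. F (m-1) < a \<and> a \<le> F m"
proof -
  define t0 where "t0 = min a 0 - 1"
  define t1 where "t1 = max a 0"
  have t0n: "t0 < 0" "t0 < a" by (auto simp: t0_def)
  have "t0 * int r \<le> t0 * 1" using r1 t0n by (intro mult_left_mono_neg) auto
  moreover have "F (t0 * int n) = t0 * int r" using F_t[of 0 t0] F0 by simp
  ultimately have f0: "F (t0 * int n) < a" using t0n by linarith
  have t1n: "0 \<le> t1" "a \<le> t1" by (auto simp: t1_def)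
  have "t1 * 1 \<le> t1 * int r" using r1 t1n by (intro mult_left_mono) auto
  moreover have "F (t1 * int n) = t1 * int r" using F_t[of 0 t1] F0 by simp
  ultimately have f1: "a \<le> F (t1 * int n)" using t1n by linarith
  define S where "S = {j::nat. a \<le> F (t0 * int n + int j)}"
  have "t0 \<le> t1" by (simp add: t0_def t1_def)
  then have "nat ((t1 - t0) * int n) \<in> S" using f1 n1 by (simp add: S_def algebra_simps)
  then have ex: "\<exists>j. j \<in> S" by blast
  define j where "j = (LEAST j. j \<in> S)"
  have jS: "j \<in> S" using LeastI_ex[OF ex] by (simp add: j_def)
  have j0: "j \<noteq> 0"
  proof
    assume "j = 0" then show False using jS f0 by (simp add: S_def)
  qed
  have "j - 1 \<notin> S" using not_less_Least[of "j-1" "\<lambda>j. j \<in> S"] j0 by (simp add: j_def)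
  then have "F (t0 * int n + int j - 1) < a" using j0 by (simp add: S_def of_nat_diff algebra_simps)
  then show ?thesis using jS by (intro exI[of _ "t0 * int n + int j"]) (simp add: S_def)
qed

lemma blk_uniq: "F (m-1) < a \<Longrightarrow> a \<le> F m \<Longrightarrow> F (m'-1) < a \<Longrightarrow> a \<le> F m' \<Longrightarrow> m = m'"
proof (rule ccontr)
  assume h: "F (m-1) < a" "a \<le> F m" "F (m'-1) < a" "a \<le> F m'" "m \<noteq> m'"
  show False
  proof (cases "m < m'")
    case True then show False using F_mono[of m "m'-1"] h by simp
  next
    case False then show False using F_mono[of m' "m-1"] h by simp
  qed
qed

definition blk :: "int \<Rightarrow> int" where "blk a = (THE m. F (m-1) < a \<and> a \<le> F m)"

lemma blk_bounds: "F (blk a - 1) < a" "a \<le> F (blk a)"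
proof -
  obtain m where m: "F (m-1) < a" "a \<le> F m" using blk_ex by blast
  have "blk a = m" unfolding blk_def
    by (rule the_equality) (use m in simp, metis m blk_uniq)
  then show "F (blk a - 1) < a" "a \<le> F (blk a)" using m by auto
qed

lemma blk_eqI: "F (m-1) < a \<Longrightarrow> a \<le> F m \<Longrightarrow> blk a = m"
  using blk_bounds blk_uniq by blast

lemma blk_iff: "a \<in> Rset n r nu m \<longleftrightarrow> blk a = m"
proof
  assume "a \<in> Rset n r nu m"
  then have "F (m-1) < a" "a \<le> F m" by (auto simp: Rset_eq)
  then show "blk a = m" by (rule blk_eqI)
next
  assume "blk a = m"
  then show "a \<in> Rset n r nu m" using blk_bounds[of a] by (auto simp: Rset_eq)
qed

lemma blk_mono: "a \<le> b \<Longrightarrow> blk a \<le> blk b"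
proof (rule ccontr)
  assume "a \<le> b" "\<not> blk a \<le> blk b"
  then have "F (blk b) \<le> F (blk a - 1)" using F_mono by simp
  then show False using blk_bounds[of a] blk_bounds[of b] \<open>a \<le> b\<close> by simp
qed

lemma blk_less: "blk a < blk b \<Longrightarrow> a < b"
  using blk_mono[of b a] by linarith

lemma blk_shift: "blk (a + t * int r) = blk a + t * int n"
  using blk_bounds[of a] F_t[of "blk a" t] F_t[of "blk a - 1" t]
  by (intro blk_eqI) (simp_all add: algebra_simps)

lemma blk_range: "(1 \<le> a \<and> a \<le> int r) \<longleftrightarrow> (1 \<le> blk a \<and> blk a \<le> int n)"
proof
  assume a: "1 \<le> a \<and> a \<le> int r"
  show "1 \<le> blk a \<and> blk a \<le> int n"
  proof (rule ccontr)
    assume "\<not> (1 \<le> blk a \<and> blk a \<le> int n)"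
    then consider "blk a \<le> 0" | "int n + 1 \<le> blk a" by linarith
    then show False
    proof cases
      case 1 then show False using F_mono[of "blk a" 0] F0 blk_bounds[of a] a by simp
    next
      case 2 then show False using F_mono[of "int n" "blk a - 1"] Fn blk_bounds[of a] a by simp
    qed
  qed
next
  assume b: "1 \<le> blk a \<and> blk a \<le> int n"
  then show "1 \<le> a \<and> a \<le> int r"
    using F_mono[of 0 "blk a - 1"] F0 F_mono[of "blk a" "int n"] Fn blk_bounds[of a] by simp
qed

lemma blk_le_bound: "blk b \<le> blk a \<Longrightarrow> b < a + int r"
  using blk_bounds[of a] blk_bounds[of b] F_mono[of "blk b" "blk a"] F_gap[of "blk a"] by simp

lemma blk_adj: "blk j = blk (j+1) \<Longrightarrow> r \<ge> 2"
  using blk_bounds[of j] blk_bounds[of "j+1"] F_gap[of "blk j"] by simp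

lemma blk_between: "blk a = blk b \<Longrightarrow> a \<le> c \<Longrightarrow> c \<le> b \<Longrightarrow> blk c = blk a"
  using blk_mono[of a c] blk_mono[of c b] by simp

lemma card_Rset: "card (Rset n r nu m) = nu m"
proof -
  define k j where "k = (m-1) div int n" and "j = (m-1) mod int n"
  have j0: "0 \<le> j" "j < int n" using n1 by (auto simp: j_def)
  have m: "m = (j+1) + k * int n" by (simp add: k_def j_def)
  have "Rset n r nu m = {k * int r + P j + 1 .. k * int r + P (j+1)}"
    by (simp add: Rset_def Let_def P_def k_def[symmetric] j_def[symmetric])
  then have "card (Rset n r nu m) = nat (P (j+1) - P j)" by simp
  also have "\<dots> = nu (j+1)" using P_succ j0 by simp
  also have "\<dots> = nu m" using nu_per[of "j+1" k] m by simp
  finally show ?thesis .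
qed

lemma finite_Rset: "finite (Rset n r nu m)" by (simp add: Rset_eq)

end


section \<open>Affine permutations\<close>

lemma aff_symD: "w \<in> aff_sym r \<Longrightarrow> bij w" "w \<in> aff_sym r \<Longrightarrow> w (i + int r) = w i + int r"
  by (auto simp: aff_sym_def)

lemma aff_shift: "w \<in> aff_sym r \<Longrightarrow> w (x + t * int r) = w x + t * int r"
  by (rule int_equivariant) (simp add: aff_sym_def)

lemma aff_comp: "w \<in> aff_sym r \<Longrightarrow> u \<in> aff_sym r \<Longrightarrow> w \<circ> u \<in> aff_sym r"
  by (auto simp: aff_sym_def bij_comp)

lemma aff_id: "id \<in> aff_sym r" by (simp add: aff_sym_def)

lemma aff_inv: "w \<in> aff_sym r \<Longrightarrow> inv w \<in> aff_sym r"
proof -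
  assume w: "w \<in> aff_sym r"
  then have b: "bij w" by (simp add: aff_sym_def)
  have "inv w (i + int r) = inv w i + int r" for i
  proof -
    have "w (inv w i + int r) = w (inv w i) + int r" using w by (simp add: aff_sym_def)
    also have "\<dots> = i + int r" using b by (simp add: bij_is_surj surj_f_inv_f)
    finally show ?thesis using b by (simp add: bij_is_inj inv_f_eq)
  qed
  then show ?thesis using b by (simp add: aff_sym_def bij_imp_bij_inv)
qed

lemma aff_inj: "w \<in> aff_sym r \<Longrightarrow> w x = w y \<longleftrightarrow> x = y"
  by (auto simp: aff_sym_def bij_def inj_def)

lemma aff_inv_f: "w \<in> aff_sym r \<Longrightarrow> inv w (w x) = x" "w \<in> aff_sym r \<Longrightarrow> w (inv w x) = x"
  by (auto simp: aff_sym_def bij_def surj_f_inv_f)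

lemma aff_bound:
  assumes w: "w \<in> aff_sym r" and r: "r \<ge> 1"
  shows "\<exists>M. \<forall>x. \<bar>w x - x\<bar> \<le> M"
proof -
  define M where "M = Max ((\<lambda>x. \<bar>w x - x\<bar>) ` {1..int r})"
  have "\<bar>w x - x\<bar> \<le> M" for x
  proof -
    define x' t where "x' = (x - 1) mod int r + 1" and "t = (x - 1) div int r"
    have x: "x = x' + t * int r" by (simp add: x'_def t_def)
    have b: "(x - 1) mod int r < int r" "0 \<le> (x - 1) mod int r" using r by simp_all
    have x'r: "x' \<in> {1..int r}" unfolding atLeastAtMost_iff x'_def using b by linarith
    have "w x - x = w x' - x'" using aff_shift[OF w, of x' t] x by simp
    then show ?thesis using x'r by (simp add: M_def)
  qed
  then show ?thesis by blast
qed

definition shf :: "nat \<Rightarrow> int \<Rightarrow> int \<times> int \<Rightarrow> int \<times> int" where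
  "shf r t x = (fst x + t * int r, snd x + t * int r)"

lemma shf_comp[simp]: "shf r s (shf r t x) = shf r (s + t) x"
  by (simp add: shf_def algebra_simps)

lemma shf_0[simp]: "shf r 0 x = x" by (simp add: shf_def)

lemma mult_small_zero:
  fixes d k :: int
  assumes "k > 0" "\<bar>d * k\<bar> < k"
  shows "d = 0"
proof (rule ccontr)
  assume "d \<noteq> 0"
  then have "1 \<le> \<bar>d\<bar>" by simp
  then have "1 * k \<le> \<bar>d\<bar> * k" using assms by (intro mult_right_mono) auto
  then show False using assms by (simp add: abs_mult)
qed

lemma NI_inj:
  fixes S :: "(int \<times> int) set" and f g :: "int \<times> int \<Rightarrow> int"
  assumes r: "r \<ge> 1" and S: "\<And>x t. x \<in> S \<Longrightarrow> shf r t x \<in> S"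
    and f: "\<And>x t. f (shf r t x) = f x + t * int r"
    and g: "\<And>x t. g (shf r t x) = g x + t * int r"
  shows "inj_on (\<lambda>x. shf r (- ((g x - 1) div int r)) x) {x\<in>S. f x \<in> {1..int r}}"
    and "(\<lambda>x. shf r (- ((g x - 1) div int r)) x) ` {x\<in>S. f x \<in> {1..int r}} \<subseteq> {x\<in>S. g x \<in> {1..int r}}"
proof -
  show "inj_on (\<lambda>x. shf r (- ((g x - 1) div int r)) x) {x\<in>S. f x \<in> {1..int r}}"
  proof (rule inj_onI)
    fix x y assume x: "x \<in> {x\<in>S. f x \<in> {1..int r}}" and y: "y \<in> {x\<in>S. f x \<in> {1..int r}}"
      and e: "shf r (- ((g x - 1) div int r)) x = shf r (- ((g y - 1) div int r)) y"
    define kx ky where "kx = (g x - 1) div int r" and "ky = (g y - 1) div int r"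
    have "shf r kx (shf r (-kx) x) = shf r kx (shf r (-ky) y)" using e by (simp add: kx_def ky_def)
    then have xy: "x = shf r (kx - ky) y" by simp
    then have "f x = f y + (kx - ky) * int r" using f by simp
    then have "\<bar>(kx - ky) * int r\<bar> < int r" using x y by auto
    then have "kx - ky = 0" using r by (intro mult_small_zero) auto
    then show "x = y" using xy by simp
  qed
  show "(\<lambda>x. shf r (- ((g x - 1) div int r)) x) ` {x\<in>S. f x \<in> {1..int r}} \<subseteq> {x\<in>S. g x \<in> {1..int r}}"
  proof
    fix z assume "z \<in> (\<lambda>x. shf r (- ((g x - 1) div int r)) x) ` {x\<in>S. f x \<in> {1..int r}}"
    then obtain x where x: "x \<in> S" and z: "z = shf r (- ((g x - 1) div int r)) x" by auto
    have "g z = g x - ((g x - 1) div int r) * int r" using g z by simp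
    also have "\<dots> = (g x - 1) mod int r + 1" by (simp add: minus_div_mult_eq_mod[symmetric] algebra_simps)
    finally have gz: "g z = (g x - 1) mod int r + 1" .
    have b: "(g x - 1) mod int r < int r" "0 \<le> (g x - 1) mod int r" using r by simp_all
    have "g z \<in> {1..int r}" unfolding atLeastAtMost_iff gz using b by linarith
    then show "z \<in> {x\<in>S. g x \<in> {1..int r}}" using S x z by simp
  qed
qed

lemma NI:
  fixes S :: "(int \<times> int) set" and f g :: "int \<times> int \<Rightarrow> int"
  assumes r: "r \<ge> 1" and S: "\<And>x t. x \<in> S \<Longrightarrow> shf r t x \<in> S"
    and f: "\<And>x t. f (shf r t x) = f x + t * int r"
    and g: "\<And>x t. g (shf r t x) = g x + t * int r"
  shows "card {x\<in>S. f x \<in> {1..int r}} = card {x\<in>S. g x \<in> {1..int r}}"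
    and "finite {x\<in>S. f x \<in> {1..int r}} \<longleftrightarrow> finite {x\<in>S. g x \<in> {1..int r}}"
proof -
  let ?A = "{x\<in>S. f x \<in> {1..int r}}" and ?B = "{x\<in>S. g x \<in> {1..int r}}"
  note AB = NI_inj[OF r S f g] and BA = NI_inj[OF r S g f]
  have fin: "finite ?A \<longleftrightarrow> finite ?B"
  proof
    assume "finite ?B"
    then have "finite ((\<lambda>x. shf r (- ((g x - 1) div int r)) x) ` ?A)" using AB(2) by (rule finite_subset[rotated])
    then show "finite ?A" using AB(1) by (rule finite_imageD)
  next
    assume "finite ?A"
    then have "finite ((\<lambda>x. shf r (- ((f x - 1) div int r)) x) ` ?B)" using BA(2) by (rule finite_subset[rotated])
    then show "finite ?B" using BA(1) by (rule finite_imageD)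
  qed
  show "finite ?A \<longleftrightarrow> finite ?B" by (rule fin)
  show "card ?A = card ?B"
  proof (cases "finite ?B")
    case True
    then have "card ?A \<le> card ?B" using AB by (intro card_inj_on_le) auto
    moreover have "card ?B \<le> card ?A" using BA True fin by (intro card_inj_on_le) auto
    ultimately show ?thesis by simp
  next
    case False then show ?thesis using fin by simp
  qed
qed



section \<open>Swaps\<close>

definition sw :: "nat \<Rightarrow> int \<Rightarrow> int \<Rightarrow> int" where
  "sw r c j = (if j mod int r = c mod int r then j + 1
               else if j mod int r = (c + 1) mod int r then j - 1 else j)"

lemma sgen_sw: "sgen r i = sw r (int i)" by (simp add: fun_eq_iff sgen_def sw_def)

lemma sw_dvd: "sw r c j = (if int r dvd (j - c) then j + 1 else if int r dvd (j - c - 1) then j - 1 else j)"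
  by (simp add: sw_def mod_eq_dvd_iff diff_diff_eq)

lemma dvd_adj: "r \<ge> 2 \<Longrightarrow> int r dvd a \<Longrightarrow> int r dvd (a + 1) \<Longrightarrow> False"
proof -
  assume r: "r \<ge> 2" and a: "int r dvd a" "int r dvd (a + 1)"
  then have "int r dvd 1" using dvd_diff[OF a(2) a(1)] by simp
  then have "int r \<le> 1" by (rule zdvd_imp_le) simp
  then show False using r by simp
qed

lemma sw_shift: "sw r c (x + t * int r) = sw r c x + t * int r"
proof -
  have "int r dvd (x + t * int r - c) \<longleftrightarrow> int r dvd (x - c)"
    by (metis add.commute add_diff_eq dvd_add_times_triv_left_iff mult.commute)
  moreover have "int r dvd (x + t * int r - c - 1) \<longleftrightarrow> int r dvd (x - c - 1)"
    by (metis add.commute diff_add_eq dvd_add_times_triv_left_iff mult.commute)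
  ultimately show ?thesis by (simp add: sw_dvd)
qed

lemma sw_A: "int r dvd (p - c) \<Longrightarrow> sw r c p = p + 1" by (simp add: sw_dvd)
lemma sw_B: "r \<ge> 2 \<Longrightarrow> int r dvd (p - c - 1) \<Longrightarrow> sw r c p = p - 1"
  using dvd_adj[of r "p - c - 1"] by (auto simp: sw_dvd)

lemma sw_invol: "r \<ge> 2 \<Longrightarrow> sw r c (sw r c x) = x"
proof -
  assume r: "r \<ge> 2"
  consider "int r dvd (x - c)" | "\<not> int r dvd (x - c)" "int r dvd (x - c - 1)"
    | "\<not> int r dvd (x - c)" "\<not> int r dvd (x - c - 1)" by blast
  then show ?thesis
  proof cases
    case 1
    then have "int r dvd (x + 1 - c - 1)" by simp
    then show ?thesis using 1 sw_A[OF 1] sw_B[OF r] by simp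
  next
    case 2
    then have "int r dvd (x - 1 - c)" by (simp add: algebra_simps)
    then show ?thesis using 2 sw_B[OF r 2(2)] sw_A by simp
  next
    case 3 then show ?thesis by (simp add: sw_dvd)
  qed
qed

lemma sw_aff: "r \<ge> 1 \<Longrightarrow> sw r c \<in> aff_sym r"
proof -
  assume r: "r \<ge> 1"
  have per: "sw r c (i + int r) = sw r c i + int r" for i using sw_shift[of r c i 1] by simp
  show ?thesis
  proof (cases "r = 1")
    case True
    then have "sw r c = (\<lambda>j. j + 1)" by (simp add: fun_eq_iff sw_def)
    moreover have "bij (\<lambda>j::int. j + 1)"
      by (rule bij_betw_byWitness[where f'="\<lambda>j. j - 1"]) auto
    ultimately show ?thesis using per by (simp add: aff_sym_def)
  next
    case False
    then have r2: "r \<ge> 2" using r by simp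
    have "bij (sw r c)"
      by (rule bij_betw_byWitness[where f'="sw r c"]) (auto simp: sw_invol[OF r2])
    then show ?thesis using per by (simp add: aff_sym_def)
  qed
qed

lemma sgen_aff: "r \<ge> 1 \<Longrightarrow> sgen r i \<in> aff_sym r"
  by (simp add: sgen_sw sw_aff)

lemma sw_order:
  assumes r: "r \<ge> 2" and pq: "p < q" and n: "\<not> (int r dvd (p - c) \<and> q = p + 1)"
  shows "sw r c p < sw r c q"
proof -
  have e: "\<And>x. sw r c x = (if int r dvd (x - c) then x+1 else if int r dvd (x - c - 1) then x - 1 else x)"
    by (simp add: sw_dvd)
  have a1: "\<not> (int r dvd (p - c) \<and> int r dvd (p + 1 - c))"
    using dvd_adj[OF r, of "p - c"] by (auto simp: algebra_simps)
  have a2: "\<not> (int r dvd (p - c - 1) \<and> int r dvd (p - c))"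
    using dvd_adj[OF r, of "p - c - 1"] by auto
  have a3: "\<not> (int r dvd (q - c - 1) \<and> int r dvd (q - c))"
    using dvd_adj[OF r, of "q - c - 1"] by auto
  have a4: "q = p + 1 \<Longrightarrow> int r dvd (q - c - 1) \<longleftrightarrow> int r dvd (p - c)" by simp
  have a5: "q = p + 2 \<Longrightarrow> int r dvd (q - c - 1) \<longleftrightarrow> int r dvd (p + 1 - c)"
    by (simp add: algebra_simps)
  consider "q = p + 1" | "q = p + 2" | "q \<ge> p + 3" using pq by linarith
  then show ?thesis
  proof cases
    case 1 then show ?thesis using n a4 a3 a2 by (simp add: e)
  next
    case 2 then show ?thesis using a1 a5 a3 a2 by (auto simp: e)
  next
    case 3 then show ?thesis by (simp add: e)
  qed
qed

section \<open>Inversions\<close>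

definition Invs :: "(int \<Rightarrow> int) \<Rightarrow> (int \<times> int) set" where
  "Invs w = {x. fst x < snd x \<and> w (snd x) < w (fst x)}"

definition nrm :: "nat \<Rightarrow> (int \<times> int) set \<Rightarrow> (int \<times> int) set" where
  "nrm r S = {x\<in>S. fst x \<in> {1..int r}}"

definition ninv :: "nat \<Rightarrow> (int \<Rightarrow> int) \<Rightarrow> nat" where
  "ninv r w = card (nrm r (Invs w))"

lemma Invs_shf: "w \<in> aff_sym r \<Longrightarrow> x \<in> Invs w \<Longrightarrow> shf r t x \<in> Invs w"
  by (simp add: Invs_def shf_def aff_shift)

lemma fin_Invs:
  assumes w: "w \<in> aff_sym r" and r: "r \<ge> 1"
  shows "finite (nrm r (Invs w))"
proof -
  obtain M where M: "\<And>x. \<bar>w x - x\<bar> \<le> M" using aff_bound[OF w r] by blast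
  have "nrm r (Invs w) \<subseteq> {1..int r} \<times> {1..int r + 2*M}"
  proof
    fix x assume x: "x \<in> nrm r (Invs w)"
    obtain p q where pq: "x = (p,q)" by force
    have h: "p < q" "w q < w p" "1 \<le> p" "p \<le> int r" using x pq by (auto simp: nrm_def Invs_def)
    have "\<bar>w p - p\<bar> \<le> M" "\<bar>w q - q\<bar> \<le> M" using M by auto
    then show "x \<in> {1..int r} \<times> {1..int r + 2*M}" using h pq by auto
  qed
  then show ?thesis by (rule finite_subset) simp
qed

lemma aff_period_diff:
  assumes w: "w \<in> aff_sym r" and d: "int r dvd (p - c)"
  shows "w (p + e) - w p = w (c + e) - w c"
proof -
  obtain k where k: "p - c = int r * k" using d by (auto simp: dvd_def)
  have p1: "p = c + k * int r" and p2: "p + e = (c + e) + k * int r" using k by (simp_all add: algebra_simps)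
  have "w p = w c + k * int r" unfolding p1 by (rule aff_shift[OF w])
  moreover have "w (p + e) = w (c + e) + k * int r" unfolding p2 by (rule aff_shift[OF w])
  ultimately show ?thesis by simp
qed

lemma ninv_plus:
  assumes r: "r \<ge> 2" and w: "w \<in> aff_sym r" and wc: "w c < w (c + 1)"
  shows "ninv r (w \<circ> sw r c) = ninv r w + 1"
proof -
  have r1: "r \<ge> 1" using r by simp
  let ?s = "sw r c"
  define pre where "pre = {x. (?s (fst x), ?s (snd x)) \<in> Invs w}"
  define E where "E = {x. int r dvd (fst x - c) \<and> snd x = fst x + 1}"
  have wE: "w p < w (p + 1)" if "int r dvd (p - c)" for p
    using aff_period_diff[OF w that, of 1] wc by simp
  have eq: "Invs (w \<circ> ?s) = pre \<union> E"
  proof (intro set_eqI iffI)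
    fix x assume x: "x \<in> Invs (w \<circ> ?s)"
    obtain p q where pq: "x = (p,q)" by force
    have h: "p < q" "w (?s q) < w (?s p)" using x by (simp_all add: pq Invs_def)
    show "x \<in> pre \<union> E"
    proof (cases "int r dvd (p - c) \<and> q = p + 1")
      case True then show ?thesis by (simp add: E_def pq)
    next
      case False
      have "?s p < ?s q" by (rule sw_order[OF r h(1) False])
      then have "x \<in> pre" using h(2) by (simp add: Invs_def pre_def pq)
      then show ?thesis by simp
    qed
  next
    fix x assume x: "x \<in> pre \<union> E"
    obtain p q where pq: "x = (p,q)" by force
    show "x \<in> Invs (w \<circ> ?s)"
    proof (cases "x \<in> E")
      case True
      then have d: "int r dvd (p - c)" and q: "q = p + 1" by (simp_all add: E_def pq)
      have "int r dvd (q - c - 1)" using d q by simp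
      then have sq: "?s q = p" using sw_B[OF r, of q c] q by simp
      have sp: "?s p = q" using sw_A[OF d] q by simp
      have "w p < w q" using wE[OF d] q by simp
      then show ?thesis using q sp sq by (simp add: Invs_def pq)
    next
      case False
      then have "x \<in> pre" using x by simp
      then have h: "?s p < ?s q" "w (?s q) < w (?s p)" by (simp_all add: pre_def Invs_def pq)
      have "p < q"
      proof (rule ccontr)
        assume "\<not> p < q"
        moreover have "p \<noteq> q" using h by auto
        ultimately have qp: "q < p" by simp
        show False
        proof (cases "int r dvd (q - c) \<and> p = q + 1")
          case True
          have "int r dvd (p - c - 1)" using True by simp
          then have sp: "?s p = q" using sw_B[OF r, of p c] True by simp
          have sq: "?s q = p" using sw_A[of r q c] True by simp
          have "w q < w p" using wE[of q] True by simp
          then show False using h(2) sp sq by simp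
        next
          case False
          have "?s q < ?s p" by (rule sw_order[OF r qp False])
          then show False using h by simp
        qed
      qed
      then show ?thesis using h by (simp add: Invs_def pq)
    qed
  qed
  have disj: "pre \<inter> E = {}"
  proof -
    { fix x assume "x \<in> pre" "x \<in> E"
      then obtain p where p: "int r dvd (p - c)" "x = (p, p+1)" by (cases x) (auto simp: E_def)
      have "int r dvd (p + 1 - c - 1)" using p by simp
      then have "?s (p+1) = p" using sw_B[OF r] by simp
      then have False using \<open>x \<in> pre\<close> p sw_A[OF p(1)] by (simp add: pre_def Invs_def) }
    then show ?thesis by blast
  qed
  have fin: "finite (nrm r (Invs (w \<circ> ?s)))" by (rule fin_Invs[OF aff_comp[OF w sw_aff[OF r1]] r1])
  have c1: "card (nrm r (Invs (w \<circ> ?s))) = card (nrm r pre) + card (nrm r E)"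
  proof -
    have "nrm r (Invs (w \<circ> ?s)) = nrm r pre \<union> nrm r E" by (auto simp: eq nrm_def)
    moreover have "finite (nrm r pre)" "finite (nrm r E)"
      using finite_subset[OF _ fin, of "nrm r pre"] finite_subset[OF _ fin, of "nrm r E"]
      by (auto simp: eq nrm_def)
    moreover have "nrm r pre \<inter> nrm r E = {}" using disj by (auto simp: nrm_def)
    ultimately show ?thesis by (simp add: card_Un_disjoint)
  qed
  define j0 where "j0 = (c - 1) mod int r + 1"
  have c2: "nrm r E = {(j0, j0 + 1)}"
  proof -
    have b: "(c - 1) mod int r < int r" "0 \<le> (c - 1) mod int r" using r by simp_all
    have j0r: "1 \<le> j0" "j0 \<le> int r" unfolding j0_def using b by linarith+
    have j0d: "int r dvd (j0 - c)"
    proof -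
      have dm: "(c - 1) div int r * int r + (c - 1) mod int r = c - 1" by (rule div_mult_mod_eq)
      have "j0 - c = - ((c - 1) div int r * int r)" unfolding j0_def using dm by linarith
      then show ?thesis by simp
    qed
    { fix p assume p: "int r dvd (p - c)" "1 \<le> p" "p \<le> int r"
      have "int r dvd (p - j0)" using dvd_diff[OF p(1) j0d] by simp
      then obtain k where k: "p - j0 = k * int r" by (auto simp: dvd_def mult.commute)
      have "\<bar>k * int r\<bar> < int r" using k p j0r by auto
      then have "k = 0" using r by (intro mult_small_zero) auto
      then have "p = j0" using k by simp }
    note uq = this
    show ?thesis
    proof (rule set_eqI)
      fix x :: "int \<times> int"
      show "x \<in> nrm r E \<longleftrightarrow> x \<in> {(j0, j0 + 1)}"
      proof
        assume "x \<in> nrm r E"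
        then have "int r dvd (fst x - c)" "snd x = fst x + 1" "1 \<le> fst x" "fst x \<le> int r"
          by (simp_all add: nrm_def E_def)
        then have "fst x = j0" "snd x = j0 + 1" using uq by auto
        then show "x \<in> {(j0, j0 + 1)}" by (simp add: prod_eq_iff)
      next
        assume "x \<in> {(j0, j0 + 1)}"
        then show "x \<in> nrm r E" using j0r j0d by (simp add: nrm_def E_def)
      qed
    qed
  qed
  have c3: "card (nrm r pre) = card (nrm r (Invs w))"
  proof -
    let ?sig = "\<lambda>x. (?s (fst x), ?s (snd x))"
    have si: "?sig (?sig x) = x" for x by (simp add: sw_invol[OF r])
    have "nrm r pre = ?sig ` {x\<in>Invs w. ?s (fst x) \<in> {1..int r}}"
    proof (intro set_eqI iffI)
      fix x assume x: "x \<in> nrm r pre"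
      have "?sig x \<in> {x\<in>Invs w. ?s (fst x) \<in> {1..int r}}"
        using x by (simp add: nrm_def pre_def sw_invol[OF r])
      moreover have "x = ?sig (?sig x)" by (rule si[symmetric])
      ultimately show "x \<in> ?sig ` {x\<in>Invs w. ?s (fst x) \<in> {1..int r}}" by (rule rev_image_eqI)
    next
      fix x assume "x \<in> ?sig ` {x\<in>Invs w. ?s (fst x) \<in> {1..int r}}"
      then obtain y where y: "y \<in> Invs w" "?s (fst y) \<in> {1..int r}" "x = ?sig y" by blast
      then show "x \<in> nrm r pre" by (simp add: nrm_def pre_def sw_invol[OF r])
    qed
    moreover have "inj ?sig"
    proof (rule injI)
      fix x y assume "?sig x = ?sig y"
      then have "?sig (?sig x) = ?sig (?sig y)" by simp
      then show "x = y" by (simp only: si)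
    qed
    ultimately have "card (nrm r pre) = card {x\<in>Invs w. ?s (fst x) \<in> {1..int r}}"
      by (simp add: card_image inj_on_subset[of ?sig UNIV])
    also have "\<dots> = card {x\<in>Invs w. fst x \<in> {1..int r}}"
      by (rule NI(1)[OF r1], erule Invs_shf[OF w], simp_all add: shf_def sw_shift)
    finally show ?thesis by (simp add: nrm_def)
  qed
  show ?thesis using c1 c2 c3 by (simp add: ninv_def)
qed



lemma chain_dec:
  fixes f :: "int \<Rightarrow> 'a::linorder"
  assumes "\<And>j. a \<le> j \<Longrightarrow> j < b \<Longrightarrow> f (j+1) < f j" and "a < b"
  shows "f b < f a"
proof -
  have "f (a + 1 + int k) < f a" if "a + 1 + int k \<le> b" for k
    using that
  proof (induction k)
    case 0 then show ?case using assms(1)[of a] by simp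
  next
    case (Suc k)
    have e: "a + 1 + int (Suc k) = (a + 1 + int k) + 1" by simp
    have "f ((a + 1 + int k) + 1) < f (a + 1 + int k)" using Suc.prems by (intro assms(1)) auto
    moreover have "f (a + 1 + int k) < f a" using Suc by simp
    ultimately show ?case unfolding e by simp
  qed
  from this[of "nat (b - a - 1)"] assms(2) show ?thesis by simp
qed

lemma chain_inc:
  fixes f :: "int \<Rightarrow> int"
  assumes "\<And>j. f j < f (j+1)" and "a < b"
  shows "f a < f b"
  using chain_dec[of a b "\<lambda>x. - f x"] assms by simp

lemma ninv_inv:
  assumes w: "w \<in> aff_sym r" and r: "r \<ge> 1"
  shows "ninv r (inv w) = ninv r w"
proof -
  let ?phi = "\<lambda>x. (w (snd x), w (fst x))"
  have "nrm r (Invs (inv w)) = ?phi ` {x\<in>Invs w. w (snd x) \<in> {1..int r}}"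
  proof (rule set_eqI, rule iffI)
    fix x assume x: "x \<in> nrm r (Invs (inv w))"
    let ?y = "(inv w (snd x), inv w (fst x))"
    have "?y \<in> {x\<in>Invs w. w (snd x) \<in> {1..int r}}"
      using x by (simp add: nrm_def Invs_def aff_inv_f[OF w])
    moreover have "x = ?phi ?y" by (simp add: aff_inv_f[OF w])
    ultimately show "x \<in> ?phi ` {x\<in>Invs w. w (snd x) \<in> {1..int r}}" by (rule rev_image_eqI)
  next
    fix x assume "x \<in> ?phi ` {x\<in>Invs w. w (snd x) \<in> {1..int r}}"
    then obtain y where y: "y \<in> Invs w" "w (snd y) \<in> {1..int r}" "x = ?phi y" by blast
    then show "x \<in> nrm r (Invs (inv w))" by (simp add: nrm_def Invs_def aff_inv_f[OF w])
  qed
  moreover have "inj ?phi"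
  proof (rule injI)
    fix x y assume "?phi x = ?phi y"
    then have "w (fst x) = w (fst y)" "w (snd x) = w (snd y)" by auto
    then show "x = y" by (simp add: aff_inj[OF w] prod_eq_iff)
  qed
  ultimately have "ninv r (inv w) = card {x\<in>Invs w. w (snd x) \<in> {1..int r}}"
    by (simp add: ninv_def card_image inj_on_subset[of ?phi UNIV])
  also have "\<dots> = card {x\<in>Invs w. fst x \<in> {1..int r}}"
    by (rule NI(1)[OF r], erule Invs_shf[OF w], simp_all add: shf_def aff_shift[OF w])
  finally show ?thesis by (simp add: ninv_def nrm_def)
qed

lemma Invs_empty_inc: "(\<And>j. w j < w (j+1)) \<Longrightarrow> Invs w = {}"
  using chain_inc[of w] by (force simp: Invs_def)

lemma ninv_zero_inc:
  assumes w: "w \<in> aff_sym r" and r: "r \<ge> 1" and z: "ninv r w = 0"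
  shows "w j < w (j+1)"
proof (rule ccontr)
  assume "\<not> w j < w (j+1)"
  then have "w (j+1) < w j" using aff_inj[OF w, of j "j+1"] by (cases "w j = w (j+1)") auto
  then have inv: "(j, j+1) \<in> Invs w" by (simp add: Invs_def)
  define t where "t = - ((j - 1) div int r)"
  have "shf r t (j, j+1) \<in> Invs w" by (rule Invs_shf[OF w inv])
  moreover have "fst (shf r t (j, j+1)) = (j - 1) mod int r + 1"
  proof -
    have dm: "(j - 1) div int r * int r + (j - 1) mod int r = j - 1" by (rule div_mult_mod_eq)
    show ?thesis unfolding shf_def t_def fst_conv mult_minus_left using dm by linarith
  qed
  moreover have "(j - 1) mod int r < int r" "0 \<le> (j - 1) mod int r" using r by simp_all
  ultimately have "shf r t (j, j+1) \<in> nrm r (Invs w)" by (simp add: nrm_def)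
  then have "nrm r (Invs w) \<noteq> {}" by blast
  then show False using z fin_Invs[OF w r] by (simp add: ninv_def)
qed

lemma inc_translation:
  assumes w: "w \<in> aff_sym r" and inc: "\<And>j. w j < w (j+1)"
  shows "w x = x + w 0"
proof -
  have mono: "a \<le> b \<Longrightarrow> w a \<le> w b" for a b
    using chain_inc[of w a b] inc by (cases "a = b") auto
  have step: "w (j+1) = w j + 1" for j
  proof -
    obtain x where x: "w x = w j + 1" using aff_symD(1)[OF w] by (metis bij_pointE)
    show ?thesis
    proof (cases "x \<le> j")
      case True then show ?thesis using mono[of x j] x by simp
    next
      case False
      then have "w (j+1) \<le> w x" using mono[of "j+1" x] by simp
      then show ?thesis using x inc[of j] by simp
    qed
  qed
  have "w (0 + x * 1) = w 0 + x * 1" by (rule int_equivariant) (simp add: step)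
  then show ?thesis by simp
qed

lemma ninv_r1: "w \<in> aff_sym 1 \<Longrightarrow> ninv 1 w = 0"
proof -
  assume w: "w \<in> aff_sym 1"
  have "w j < w (j+1)" for j using aff_symD(2)[OF w, of j] by simp
  then show ?thesis by (simp add: ninv_def Invs_empty_inc nrm_def)
qed

lemma ninv_descent:
  assumes w: "w \<in> aff_sym r" and r: "r \<ge> 1" and p: "ninv r w > 0"
  shows "\<exists>j. w (j+1) < w j"
proof (rule ccontr)
  assume a: "\<not> (\<exists>j. w (j+1) < w j)"
  have "w j < w (j+1)" for j
  proof -
    have "\<not> w (j+1) < w j" using a by blast
    moreover have "w j \<noteq> w (j+1)" using aff_inj[OF w, of j "j+1"] by simp
    ultimately show ?thesis by simp
  qed
  then have "Invs w = {}" by (rule Invs_empty_inc)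
  then show False using p by (simp add: ninv_def nrm_def)
qed

lemma sw_mod: "c mod int r = c' mod int r \<Longrightarrow> sw r c = sw r c'"
proof -
  assume "c mod int r = c' mod int r"
  moreover have "(c + 1) mod int r = (c' + 1) mod int r" using calculation by (metis mod_add_left_eq)
  ultimately show ?thesis by (simp add: fun_eq_iff sw_def)
qed

lemma ninv_le:
  assumes r: "r \<ge> 1" and w: "w \<in> aff_sym r"
  shows "ninv r (w \<circ> sw r c) \<le> ninv r w + 1"
proof (cases "r = 1")
  case True
  then show ?thesis using ninv_r1 aff_comp[OF w sw_aff[OF r]] by simp
next
  case False
  then have r2: "r \<ge> 2" using r by simp
  let ?s = "sw r c"
  show ?thesis
  proof (cases "w c < w (c+1)")
    case True then show ?thesis using ninv_plus[OF r2 w True] by simp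
  next
    case False
    then have lt: "w (c+1) < w c" using aff_inj[OF w, of c "c+1"] by (cases "w c = w (c+1)") auto
    have A: "?s c = c + 1" by (rule sw_A) simp
    have B: "?s (c+1) = c" using sw_B[OF r2, of "c+1" c] by simp
    have w': "w \<circ> ?s \<in> aff_sym r" by (rule aff_comp[OF w sw_aff[OF r]])
    have "(w \<circ> ?s) c < (w \<circ> ?s) (c+1)" using lt A B by simp
    from ninv_plus[OF r2 w' this] have "ninv r (w \<circ> ?s \<circ> ?s) = ninv r (w \<circ> ?s) + 1" .
    moreover have "w \<circ> ?s \<circ> ?s = w" by (simp add: fun_eq_iff sw_invol[OF r2])
    ultimately show ?thesis by simp
  qed
qed

lemma foldr_comp_id: "foldr (\<circ>) fs h = foldr (\<circ>) fs id \<circ> h"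
  by (induction fs) auto

lemma words_aff:
  assumes r: "r \<ge> 1" and ws: "set ws \<subseteq> {1..r}"
  shows "foldr (\<circ>) (map (sgen r) ws) id \<in> aff_sym r
         \<and> ninv r (foldr (\<circ>) (map (sgen r) ws) id) \<le> length ws"
  using ws
proof (induction ws rule: rev_induct)
  case Nil
  have "Invs id = {}" by (auto simp: Invs_def)
  then have "ninv r id = 0" by (simp add: ninv_def nrm_def)
  then show ?case using aff_id[of r] unfolding id_def by simp
next
  case (snoc i ws)
  let ?F = "foldr (\<circ>) (map (sgen r) ws) id"
  have e: "foldr (\<circ>) (map (sgen r) (ws @ [i])) id = ?F \<circ> sw r (int i)"
    using foldr_comp_id[of "map (sgen r) ws" "sgen r i"] by (simp add: sgen_sw)
  have "set ws \<subseteq> {1..r}" using snoc.prems by simp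
  note IH = snoc.IH[OF this, THEN conjunct1] snoc.IH[OF this, THEN conjunct2]
  have l: "length (ws @ [i]) = length ws + 1" by simp
  show ?case unfolding e l
  proof (rule conjI)
    show "?F \<circ> sw r (int i) \<in> aff_sym r" by (rule aff_comp[OF IH(1) sw_aff[OF r]])
    have "ninv r (?F \<circ> sw r (int i)) \<le> ninv r ?F + 1" by (rule ninv_le[OF r IH(1)])
    then show "ninv r (?F \<circ> sw r (int i)) \<le> length ws + 1" using IH(2) by linarith
  qed
qed

lemma ninv_rho: "ninv r (rho_pow a \<circ> w) = ninv r w"
  by (simp add: ninv_def Invs_def rho_pow_def)

lemma rep_ex:
  assumes r: "r \<ge> 1" and w: "w \<in> aff_sym r"
  shows "\<exists>a ws. length ws = ninv r w \<and> set ws \<subseteq> {1..r}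
            \<and> w = rho_pow a \<circ> foldr (\<circ>) (map (sgen r) ws) id"
  using w
proof (induction "ninv r w" arbitrary: w rule: less_induct)
  case less
  show ?case
  proof (cases "ninv r w = 0")
    case True
    have inc: "w j < w (j+1)" for j by (rule ninv_zero_inc[OF less.prems r True])
    have "w = rho_pow (w 0) \<circ> foldr (\<circ>) (map (sgen r) []) id"
    proof (rule ext)
      fix x show "w x = (rho_pow (w 0) \<circ> foldr (\<circ>) (map (sgen r) []) id) x"
        using inc_translation[OF less.prems inc, of x] by (simp add: rho_pow_def)
    qed
    moreover have "length ([]::nat list) = ninv r w" "set ([]::nat list) \<subseteq> {1..r}" using True by simp_all
    ultimately show ?thesis by blast
  next
    case False
    then obtain j where j: "w (j+1) < w j" using ninv_descent[OF less.prems r] by auto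
    have r2: "r \<ge> 2"
    proof (rule ccontr)
      assume "\<not> r \<ge> 2" then have "r = 1" using r by simp
      then show False using aff_symD(2)[OF less.prems, of j] j by simp
    qed
    let ?s = "sw r j"
    define w' where "w' = w \<circ> ?s"
    have w': "w' \<in> aff_sym r" unfolding w'_def by (rule aff_comp[OF less.prems sw_aff[OF r]])
    have A: "?s j = j + 1" by (rule sw_A) simp
    have B: "?s (j+1) = j" using sw_B[OF r2, of "j+1" j] by simp
    have "w' j < w' (j+1)" using j A B by (simp add: w'_def)
    from ninv_plus[OF r2 w' this] have "ninv r (w' \<circ> ?s) = ninv r w' + 1" .
    moreover have ww: "w' \<circ> ?s = w" by (simp add: w'_def fun_eq_iff sw_invol[OF r2])
    ultimately have lt: "ninv r w' < ninv r w" and eqn: "ninv r w = ninv r w' + 1" by simp_all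
    obtain a ws where aws: "length ws = ninv r w'" "set ws \<subseteq> {1..r}"
      "w' = rho_pow a \<circ> foldr (\<circ>) (map (sgen r) ws) id"
      using less.hyps[OF lt w'] by blast
    define i where "i = nat ((j - 1) mod int r) + 1"
    have b: "(j - 1) mod int r < int r" "0 \<le> (j - 1) mod int r" using r by simp_all
    have i: "i \<in> {1..r}" using b by (simp add: i_def)
    have "int i mod int r = j mod int r"
    proof -
      have "int i = (j - 1) mod int r + 1" using b by (simp add: i_def)
      then show ?thesis by (simp add: mod_add_left_eq)
    qed
    then have si: "sgen r i = ?s" unfolding sgen_sw by (rule sw_mod)
    have "foldr (\<circ>) (map (sgen r) (ws @ [i])) id = foldr (\<circ>) (map (sgen r) ws) id \<circ> ?s"
      using foldr_comp_id[of "map (sgen r) ws" "sgen r i"] si by simp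
    then have "w = rho_pow a \<circ> foldr (\<circ>) (map (sgen r) (ws @ [i])) id"
      using ww aws(3) by (simp add: comp_assoc)
    moreover have "length (ws @ [i]) = ninv r w" using aws(1) eqn by simp
    moreover have "set (ws @ [i]) \<subseteq> {1..r}" using aws(2) i by simp
    ultimately show ?thesis by blast
  qed
qed

lemma len_ninv:
  assumes r: "r \<ge> 1" and w: "w \<in> aff_sym r"
  shows "len r w = ninv r w"
proof -
  let ?P = "\<lambda>k. \<exists>a ws. length ws = k \<and> set ws \<subseteq> {1..r} \<and> w = rho_pow a \<circ> foldr (\<circ>) (map (sgen r) ws) id"
  have P: "?P (ninv r w)" using rep_ex[OF r w] by blast
  then have le: "len r w \<le> ninv r w" unfolding len_def by (rule Least_le)
  have "?P (len r w)" unfolding len_def using P by (rule LeastI)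
  then obtain a ws where aws: "length ws = len r w" "set ws \<subseteq> {1..r}"
    "w = rho_pow a \<circ> foldr (\<circ>) (map (sgen r) ws) id" by blast
  have "ninv r w = ninv r (foldr (\<circ>) (map (sgen r) ws) id)" using aws(3) ninv_rho by metis
  also have "\<dots> \<le> length ws" using words_aff[OF r aws(2)] by simp
  finally show ?thesis using le aws(1) by simp
qed



section \<open>Young subgroups and double cosets\<close>

lemma young_aff: "w \<in> Young n r nu \<Longrightarrow> w \<in> aff_sym r" by (simp add: Young_def)

lemma young_comp: "w \<in> Young n r nu \<Longrightarrow> u \<in> Young n r nu \<Longrightarrow> w \<circ> u \<in> Young n r nu"
proof -
  assume w: "w \<in> Young n r nu" and u: "u \<in> Young n r nu"
  have "(w \<circ> u) ` Rset n r nu m = Rset n r nu m" for m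
  proof -
    have "(w \<circ> u) ` Rset n r nu m = w ` (u ` Rset n r nu m)" by (simp only: image_comp)
    then show ?thesis using w u by (simp add: Young_def)
  qed
  then show ?thesis using w u by (simp add: Young_def aff_comp)
qed

lemma young_id: "id \<in> Young n r nu" by (simp add: Young_def aff_id)

context blocks
begin

lemma young_blk: "w \<in> Young n r nu \<Longrightarrow> blk (w a) = blk a"
proof -
  assume w: "w \<in> Young n r nu"
  have "a \<in> Rset n r nu (blk a)" by (simp add: blk_iff)
  then have "w a \<in> w ` Rset n r nu (blk a)" by blast
  then have "w a \<in> Rset n r nu (blk a)" using w by (simp add: Young_def)
  then show ?thesis by (simp add: blk_iff)
qed

lemma young_sw:
  assumes c: "blk c = blk (c+1)"
  shows "sw r c \<in> Young n r nu"
proof -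
  have r2: "r \<ge> 2" by (rule blk_adj[OF c])
  have sub: "sw r c ` Rset n r nu m \<subseteq> Rset n r nu m" for m
  proof
    fix y assume "y \<in> sw r c ` Rset n r nu m"
    then obtain x where x: "x \<in> Rset n r nu m" and y: "y = sw r c x" by blast
    have bx: "blk x = m" using x by (simp add: blk_iff)
    have "blk (sw r c x) = blk x"
    proof (cases "int r dvd (x - c)")
      case True
      then obtain k where k: "x - c = int r * k" by (auto simp: dvd_def)
      have e1: "x = c + k * int r" and e2: "x + 1 = (c + 1) + k * int r" using k by (simp_all add: algebra_simps)
      have "blk x = blk c + k * int n" unfolding e1 by (rule blk_shift)
      moreover have "blk (x+1) = blk (c+1) + k * int n" unfolding e2 by (rule blk_shift)
      ultimately
      show ?thesis using sw_A[OF True] c by simp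
    next
      case False
      show ?thesis
      proof (cases "int r dvd (x - c - 1)")
        case True
        then obtain k where k: "x - c - 1 = int r * k" by (auto simp: dvd_def)
        have e1: "x - 1 = c + k * int r" and e2: "x = (c + 1) + k * int r" using k by (simp_all add: algebra_simps)
        have "blk (x - 1) = blk c + k * int n" unfolding e1 by (rule blk_shift)
        moreover have "blk x = blk (c+1) + k * int n" unfolding e2 by (rule blk_shift)
        ultimately
        show ?thesis using sw_B[OF r2 True] c by simp
      next
        case False
        then show ?thesis using \<open>\<not> int r dvd (x - c)\<close> by (simp add: sw_dvd)
      qed
    qed
    then show "y \<in> Rset n r nu m" using y bx by (simp add: blk_iff)
  qed
  have "sw r c ` Rset n r nu m = Rset n r nu m" for m
  proof
    show "Rset n r nu m \<subseteq> sw r c ` Rset n r nu m"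
    proof
      fix x assume "x \<in> Rset n r nu m"
      then have "sw r c x \<in> Rset n r nu m" using sub by blast
      moreover have "x = sw r c (sw r c x)" by (simp add: sw_invol[OF r2])
      ultimately show "x \<in> sw r c ` Rset n r nu m" by (rule rev_image_eqI)
    qed
  qed (rule sub)
  then show ?thesis using sw_aff[OF r1] by (simp add: Young_def)
qed

end

definition Same :: "nat \<Rightarrow> nat \<Rightarrow> (int \<Rightarrow> nat) \<Rightarrow> (int \<times> int) set" where
  "Same n r mu = {x. fst x < snd x \<and> blocks.blk n r mu (fst x) = blocks.blk n r mu (snd x)}"

definition Cross :: "nat \<Rightarrow> nat \<Rightarrow> (int \<Rightarrow> nat) \<Rightarrow> (int \<Rightarrow> nat) \<Rightarrow> (int \<Rightarrow> int) \<Rightarrow> (int \<times> int) set" where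
  "Cross n r lam mu z = {x. blocks.blk n r mu (fst x) < blocks.blk n r mu (snd x)
                          \<and> blocks.blk n r lam (z (snd x)) \<le> blocks.blk n r lam (z (fst x))}"

locale dc =
  fixes n r :: nat and lam mu :: "int \<Rightarrow> nat"
  assumes n1: "n \<ge> 1" and r1: "r \<ge> 1" and lamL: "lam \<in> Lambda n r" and muL: "mu \<in> Lambda n r"
begin

sublocale L: blocks n r lam by (unfold_locales) (use n1 r1 lamL in auto)
sublocale M: blocks n r mu by (unfold_locales) (use n1 r1 muL in auto)

abbreviation "rb \<equiv> L.blk"
abbreviation "cb \<equiv> M.blk"

lemma Same_eq: "Same n r mu = {x. fst x < snd x \<and> cb (fst x) = cb (snd x)}"
  by (simp add: Same_def)

lemma Cross_eq: "Cross n r lam mu z = {x. cb (fst x) < cb (snd x) \<and> rb (z (snd x)) \<le> rb (z (fst x))}"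
  by (simp add: Cross_def)

lemma Invs_UB: "z \<in> aff_sym r \<Longrightarrow> Invs z \<subseteq> Same n r mu \<union> Cross n r lam mu z"
proof
  fix x assume z: "z \<in> aff_sym r" and x: "x \<in> Invs z"
  then have h: "fst x < snd x" "z (snd x) < z (fst x)" by (auto simp: Invs_def)
  have c: "cb (fst x) \<le> cb (snd x)" using h M.blk_mono by simp
  have "rb (z (snd x)) \<le> rb (z (fst x))" using h L.blk_mono by simp
  then show "x \<in> Same n r mu \<union> Cross n r lam mu z"
    using h c by (cases "cb (fst x) = cb (snd x)") (auto simp: Same_eq Cross_eq)
qed

lemma fin_Same: "finite (nrm r (Same n r mu))"
proof -
  have "nrm r (Same n r mu) \<subseteq> {1..int r} \<times> {1..2 * int r}"
  proof
    fix x assume x: "x \<in> nrm r (Same n r mu)"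
    then have h: "fst x < snd x" "cb (fst x) = cb (snd x)" "1 \<le> fst x" "fst x \<le> int r"
      by (auto simp: nrm_def Same_eq)
    have "snd x < fst x + int r" using M.blk_le_bound[of "snd x" "fst x"] h by simp
    then show "x \<in> {1..int r} \<times> {1..2 * int r}" using h by (cases x) auto
  qed
  then show ?thesis by (rule finite_subset) simp
qed

lemma fin_Cross:
  assumes z: "z \<in> aff_sym r"
  shows "finite (nrm r (Cross n r lam mu z))"
proof -
  obtain M where M: "\<And>x. \<bar>z x - x\<bar> \<le> M" using aff_bound[OF z r1] by blast
  have "nrm r (Cross n r lam mu z) \<subseteq> {1..int r} \<times> {1..2 * int r + 2 * M}"
  proof
    fix x assume x: "x \<in> nrm r (Cross n r lam mu z)"
    then have h: "cb (fst x) < cb (snd x)" "rb (z (snd x)) \<le> rb (z (fst x))" "1 \<le> fst x" "fst x \<le> int r"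
      by (auto simp: nrm_def Cross_eq)
    have "fst x < snd x" using M.blk_less h by simp
    moreover have "z (snd x) < z (fst x) + int r" using L.blk_le_bound h by simp
    moreover have "\<bar>z (fst x) - fst x\<bar> \<le> M" "\<bar>z (snd x) - snd x\<bar> \<le> M" using M by auto
    ultimately show "x \<in> {1..int r} \<times> {1..2 * int r + 2 * M}" using h by (cases x) auto
  qed
  then show ?thesis by (rule finite_subset) simp
qed

lemma N_UB:
  assumes z: "z \<in> aff_sym r"
  shows "card (nrm r (Same n r mu \<union> Cross n r lam mu z)) = card (nrm r (Same n r mu)) + card (nrm r (Cross n r lam mu z))"
proof -
  have "nrm r (Same n r mu \<union> Cross n r lam mu z) = nrm r (Same n r mu) \<union> nrm r (Cross n r lam mu z)"
    by (auto simp: nrm_def)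
  moreover have "nrm r (Same n r mu) \<inter> nrm r (Cross n r lam mu z) = {}"
    by (auto simp: nrm_def Same_eq Cross_eq)
  ultimately show ?thesis using fin_Same fin_Cross[OF z] by (simp add: card_Un_disjoint)
qed

lemma Cross_shf:
  assumes z: "z \<in> aff_sym r" and x: "x \<in> Cross n r lam mu z"
  shows "shf r t x \<in> Cross n r lam mu z"
proof -
  have "z (fst x + t * int r) = z (fst x) + t * int r" "z (snd x + t * int r) = z (snd x) + t * int r"
    using aff_shift[OF z] by auto
  then show ?thesis using x by (simp add: Cross_eq shf_def M.blk_shift L.blk_shift)
qed

lemma Cross_coset:
  assumes y: "y \<in> aff_sym r" and w: "w \<in> Young n r lam" and u: "u \<in> Young n r mu"
  shows "card (nrm r (Cross n r lam mu (w \<circ> y \<circ> u))) = card (nrm r (Cross n r lam mu y))"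
proof -
  let ?z = "w \<circ> y \<circ> u"
  have ua: "u \<in> aff_sym r" by (rule young_aff[OF u])
  have za: "?z \<in> aff_sym r" by (rule aff_comp[OF aff_comp[OF young_aff[OF w] y] ua])
  let ?psi = "\<lambda>x. (u (fst x), u (snd x))"
  have cz: "x \<in> Cross n r lam mu ?z \<longleftrightarrow> ?psi x \<in> Cross n r lam mu y" for x
    by (simp add: Cross_eq M.young_blk[OF u] L.young_blk[OF w])
  have img: "{x \<in> Cross n r lam mu y. fst x \<in> {1..int r}} = ?psi ` {x\<in>Cross n r lam mu ?z. u (fst x) \<in> {1..int r}}"
  proof (rule set_eqI, rule iffI)
    fix x assume x: "x \<in> {x \<in> Cross n r lam mu y. fst x \<in> {1..int r}}"
    let ?v = "(inv u (fst x), inv u (snd x))"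
    have e: "?psi ?v = x" by (simp add: aff_inv_f[OF ua])
    have "?v \<in> {x\<in>Cross n r lam mu ?z. u (fst x) \<in> {1..int r}}" using x cz[of ?v] e by (simp add: aff_inv_f[OF ua])
    then show "x \<in> ?psi ` {x\<in>Cross n r lam mu ?z. u (fst x) \<in> {1..int r}}" using e[symmetric] by (rule rev_image_eqI)
  next
    fix x assume "x \<in> ?psi ` {x\<in>Cross n r lam mu ?z. u (fst x) \<in> {1..int r}}"
    then obtain v where v: "v \<in> Cross n r lam mu ?z" "u (fst v) \<in> {1..int r}" "x = ?psi v" by blast
    then show "x \<in> {x \<in> Cross n r lam mu y. fst x \<in> {1..int r}}" using cz[of v] by simp
  qed
  have inj: "inj ?psi"
  proof (rule injI)
    fix a b assume "?psi a = ?psi b"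
    then show "a = b" by (simp add: aff_inj[OF ua] prod_eq_iff)
  qed
  have "card (nrm r (Cross n r lam mu ?z)) = card {x\<in>Cross n r lam mu ?z. u (fst x) \<in> {1..int r}}"
    unfolding nrm_def
    by (rule NI(1)[OF r1, symmetric], erule Cross_shf[OF za], simp_all add: shf_def aff_shift[OF ua])
  also have "\<dots> = card (?psi ` {x\<in>Cross n r lam mu ?z. u (fst x) \<in> {1..int r}})"
    using inj by (simp add: card_image inj_on_subset[of ?psi UNIV])
  also have "\<dots> = card (nrm r (Cross n r lam mu y))" unfolding nrm_def img ..
  finally show ?thesis .
qed

lemma UB_sub_Invs:
  assumes z: "z \<in> aff_sym r"
    and a: "\<And>j. cb j = cb (j+1) \<Longrightarrow> z (j+1) < z j"
    and b: "\<And>v. rb v = rb (v+1) \<Longrightarrow> inv z (v+1) < inv z v"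
  shows "Same n r mu \<union> Cross n r lam mu z \<subseteq> Invs z"
proof
  fix x assume x: "x \<in> Same n r mu \<union> Cross n r lam mu z"
  obtain p q where pq: "x = (p, q)" by force
  show "x \<in> Invs z"
  proof (cases "x \<in> Same n r mu")
    case True
    then have h: "p < q" "cb p = cb q" by (simp_all add: Same_eq pq)
    have "z q < z p"
    proof (rule chain_dec[OF _ h(1)])
      fix j assume j: "p \<le> j" "j < q"
      have "cb j = cb p" by (rule M.blk_between[OF h(2)]) (use j in auto)
      moreover have "cb (j+1) = cb p" by (rule M.blk_between[OF h(2)]) (use j in auto)
      ultimately show "z (j+1) < z j" using a by simp
    qed
    then show ?thesis using h by (simp add: Invs_def pq)
  next
    case False
    then have h: "cb p < cb q" "rb (z q) \<le> rb (z p)" using x by (simp_all add: Cross_eq pq)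
    have pq': "p < q" using M.blk_less h(1) by simp
    have "z q < z p"
    proof (cases "rb (z q) < rb (z p)")
      case True then show ?thesis using L.blk_less by simp
    next
      case False
      then have e: "rb (z p) = rb (z q)" using h by simp
      show ?thesis
      proof (rule ccontr)
        assume "\<not> z q < z p"
        moreover have "z q \<noteq> z p" using aff_inj[OF z] pq' by simp
        ultimately have lt: "z p < z q" by simp
        have "inv z (z q) < inv z (z p)"
        proof (rule chain_dec[OF _ lt])
          fix v assume v: "z p \<le> v" "v < z q"
          have "rb v = rb (z p)" by (rule L.blk_between[OF e]) (use v in auto)
          moreover have "rb (v+1) = rb (z p)" by (rule L.blk_between[OF e]) (use v in auto)
          ultimately show "inv z (v+1) < inv z v" using b by simp
        qed
        then show False using pq' by (simp add: aff_inv_f[OF z])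
      qed
    qed
    then show ?thesis using pq' by (simp add: Invs_def pq)
  qed
qed

lemma ninv_plus_left:
  assumes r2: "r \<ge> 2" and z: "z \<in> aff_sym r" and c: "inv z c < inv z (c+1)"
  shows "ninv r (sw r c \<circ> z) = ninv r z + 1"
proof -
  let ?s = "sw r c"
  have sa: "?s \<in> aff_sym r" by (rule sw_aff[OF r1])
  have bs: "bij ?s" using sa by (simp add: aff_sym_def)
  have bz: "bij z" using z by (simp add: aff_sym_def)
  have si: "inv ?s = ?s" by (rule inv_unique_comp) (simp_all add: fun_eq_iff sw_invol[OF r2])
  have "inv (?s \<circ> z) = inv z \<circ> ?s" using o_inv_distrib[OF bs bz] si by simp
  then have "ninv r (?s \<circ> z) = ninv r (inv z \<circ> ?s)"
    using ninv_inv[OF aff_comp[OF sa z] r1] by simp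
  also have "\<dots> = ninv r (inv z) + 1" by (rule ninv_plus[OF r2 aff_inv[OF z] c])
  also have "\<dots> = ninv r z + 1" using ninv_inv[OF z r1] by simp
  finally show ?thesis .
qed

theorem longest_len:
  assumes y: "y \<in> aff_sym r" and lz: "longest_in r (dcoset n r lam y mu) z"
  shows "len r z = card (nrm r (Same n r mu)) + card (nrm r (Cross n r lam mu y))"
proof -
  have zD: "z \<in> dcoset n r lam y mu" using lz by (simp add: longest_in_def)
  then obtain w u where w: "w \<in> Young n r lam" and u: "u \<in> Young n r mu" and zeq: "z = w \<circ> y \<circ> u"
    by (auto simp: dcoset_def)
  have za: "z \<in> aff_sym r" unfolding zeq by (rule aff_comp[OF aff_comp[OF young_aff[OF w] y] young_aff[OF u]])
  have long: "\<And>z'. z' \<in> dcoset n r lam y mu \<Longrightarrow> len r z' \<le> len r z" using lz by (simp add: longest_in_def)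
  have N: "card (nrm r (Same n r mu \<union> Cross n r lam mu z)) = card (nrm r (Same n r mu)) + card (nrm r (Cross n r lam mu y))"
    using N_UB[OF za] Cross_coset[OF y w u] zeq by simp
  have "nrm r (Same n r mu \<union> Cross n r lam mu z) = nrm r (Same n r mu) \<union> nrm r (Cross n r lam mu z)"
    by (auto simp: nrm_def)
  then have finUB: "finite (nrm r (Same n r mu \<union> Cross n r lam mu z))"
    using fin_Same fin_Cross[OF za] by simp
  have le: "ninv r z \<le> card (nrm r (Same n r mu \<union> Cross n r lam mu z))"
    unfolding ninv_def using Invs_UB[OF za] finUB by (intro card_mono) (auto simp: nrm_def)
  have ge: "card (nrm r (Same n r mu \<union> Cross n r lam mu z)) \<le> ninv r z"
  proof (rule ccontr)
    assume "\<not> ?thesis"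
    then have lt: "ninv r z < card (nrm r (Same n r mu \<union> Cross n r lam mu z))" by simp
    have "\<not> (Same n r mu \<union> Cross n r lam mu z \<subseteq> Invs z)"
    proof
      assume "Same n r mu \<union> Cross n r lam mu z \<subseteq> Invs z"
      then have "nrm r (Same n r mu \<union> Cross n r lam mu z) \<subseteq> nrm r (Invs z)" by (auto simp: nrm_def)
      then have "card (nrm r (Same n r mu \<union> Cross n r lam mu z)) \<le> ninv r z"
        unfolding ninv_def using fin_Invs[OF za r1] by (rule card_mono[rotated])
      then show False using lt by simp
    qed
    then consider j where "cb j = cb (j+1)" "\<not> z (j+1) < z j"
      | v where "rb v = rb (v+1)" "\<not> inv z (v+1) < inv z v"
      using UB_sub_Invs[OF za] by blast
    then show False
    proof cases
      case 1
      have r2: "r \<ge> 2" by (rule M.blk_adj[OF 1(1)])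
      have lt2: "z j < z (j+1)" using 1(2) aff_inj[OF za, of j "j+1"] by (cases "z j = z (j+1)") auto
      have sY: "sw r j \<in> Young n r mu" by (rule M.young_sw[OF 1(1)])
      have "z \<circ> sw r j = w \<circ> y \<circ> (u \<circ> sw r j)" by (simp add: zeq comp_assoc)
      then have mem: "z \<circ> sw r j \<in> dcoset n r lam y mu"
        using w young_comp[OF u sY] by (auto simp: dcoset_def)
      have a2: "z \<circ> sw r j \<in> aff_sym r" by (rule aff_comp[OF za sw_aff[OF r1]])
      have "len r (z \<circ> sw r j) = len r z + 1"
        using len_ninv[OF r1 a2] len_ninv[OF r1 za] ninv_plus[OF r2 za lt2] by simp
      then show False using long[OF mem] by simp
    next
      case 2
      have r2: "r \<ge> 2" by (rule L.blk_adj[OF 2(1)])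
      have iz: "inv z \<in> aff_sym r" by (rule aff_inv[OF za])
      have lt2: "inv z v < inv z (v+1)" using 2(2) aff_inj[OF iz, of v "v+1"] by (cases "inv z v = inv z (v+1)") auto
      have sY: "sw r v \<in> Young n r lam" by (rule L.young_sw[OF 2(1)])
      have "sw r v \<circ> z = (sw r v \<circ> w) \<circ> y \<circ> u" by (simp add: zeq comp_assoc)
      then have mem: "sw r v \<circ> z \<in> dcoset n r lam y mu"
        using u young_comp[OF sY w] by (auto simp: dcoset_def)
      have a2: "sw r v \<circ> z \<in> aff_sym r" by (rule aff_comp[OF sw_aff[OF r1] za])
      have "len r (sw r v \<circ> z) = len r z + 1"
        using len_ninv[OF r1 a2] len_ninv[OF r1 za] ninv_plus_left[OF r2 za lt2] by simp
      then show False using long[OF mem] by simp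
    qed
  qed
  show ?thesis using le ge N len_ninv[OF r1 za] by simp
qed

end



context dc
begin

definition C :: "(int \<Rightarrow> int) \<Rightarrow> int \<Rightarrow> int \<Rightarrow> int set" where
  "C y i j = {a. rb a = i \<and> cb (inv y a) = j}"

lemma C_eq:
  assumes y: "y \<in> aff_sym r"
  shows "Rset n r lam i \<inter> y ` Rset n r mu j = C y i j"
proof (rule set_eqI)
  fix a
  have "a \<in> y ` Rset n r mu j \<longleftrightarrow> inv y a \<in> Rset n r mu j"
  proof
    assume "a \<in> y ` Rset n r mu j"
    then show "inv y a \<in> Rset n r mu j" using aff_inv_f[OF y] by auto
  next
    assume "inv y a \<in> Rset n r mu j"
    moreover have "a = y (inv y a)" using aff_inv_f[OF y] by simp
    ultimately show "a \<in> y ` Rset n r mu j" by (rule rev_image_eqI)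
  qed
  then show "a \<in> Rset n r lam i \<inter> y ` Rset n r mu j \<longleftrightarrow> a \<in> C y i j"
    by (simp add: C_def L.blk_iff M.blk_iff)
qed

lemma jmath_C: "y \<in> aff_sym r \<Longrightarrow> jmath n r lam y mu i j = card (C y i j)"
  by (simp add: jmath_def C_eq)

lemma fin_C: "finite (C y i j)"
proof -
  have "C y i j \<subseteq> Rset n r lam i" by (auto simp: C_def L.blk_iff)
  then show ?thesis using L.finite_Rset by (rule finite_subset)
qed

lemma co_jmath:
  assumes y: "y \<in> aff_sym r"
  shows "co (jmath n r lam y mu) = mu"
proof
  fix j
  let ?A = "jmath n r lam y mu"
  let ?X = "y ` Rset n r mu j"
  have finX: "finite ?X" using M.finite_Rset by simp
  have cX: "card ?X = mu j"
  proof -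
    have "inj_on y (Rset n r mu j)" using y by (auto simp: aff_sym_def bij_def inj_on_def inj_def)
    then show ?thesis by (simp add: card_image M.card_Rset)
  qed
  have cell: "?A i j = card {a \<in> ?X. rb a = i}" for i
  proof -
    have "Rset n r lam i \<inter> ?X = {a \<in> ?X. rb a = i}" by (auto simp: L.blk_iff)
    then show ?thesis by (simp add: jmath_def)
  qed
  have supp: "{i. ?A i j \<noteq> 0} = rb ` ?X"
  proof (rule set_eqI)
    fix i
    have "?A i j \<noteq> 0 \<longleftrightarrow> {a \<in> ?X. rb a = i} \<noteq> {}" using cell[of i] finX by simp
    then show "i \<in> {i. ?A i j \<noteq> 0} \<longleftrightarrow> i \<in> rb ` ?X" by auto
  qed
  have cs: "card ?X = (\<Sum>i\<in>rb ` ?X. card {a \<in> ?X. rb a = i})"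
    using sum.image_gen[OF finX, of "\<lambda>_. (1::nat)" rb] by simp
  have "co ?A j = (\<Sum>i\<in>rb ` ?X. ?A i j)" unfolding co_def supp ..
  also have "\<dots> = (\<Sum>i\<in>rb ` ?X. card {a \<in> ?X. rb a = i})" by (rule sum.cong) (simp_all add: cell)
  finally show "co ?A j = mu j" using cX cs by simp
qed

lemma dA_Cross:
  assumes y: "y \<in> aff_sym r"
  shows "card (nrm r (Cross n r lam mu y)) = dA n (jmath n r lam y mu)"
proof -
  let ?A = "jmath n r lam y mu"
  define V where "V = {x. fst x \<in> {1..int r} \<and> cb (inv y (fst x)) < cb (inv y (snd x)) \<and> rb (snd x) \<le> rb (fst x)}"
  define T where "T = {(i, j, k, l). 1 \<le> i \<and> i \<le> int n \<and> k \<le> i \<and> j < l \<and> ?A i j \<noteq> 0 \<and> ?A k l \<noteq> 0}"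
  define cp where "cp = (\<lambda>(i, j, k, l). C y i j \<times> C y k l)"
  let ?yy = "\<lambda>x. (y (fst x), y (snd x))"
  let ?S = "{x\<in>Cross n r lam mu y. y (fst x) \<in> {1..int r}}"
  have NIy: "card (nrm r (Cross n r lam mu y)) = card ?S \<and> (finite (nrm r (Cross n r lam mu y)) \<longleftrightarrow> finite ?S)"
    unfolding nrm_def
    using NI[OF r1, of "Cross n r lam mu y" fst "\<lambda>x. y (fst x)"] Cross_shf[OF y]
    by (simp add: shf_def aff_shift[OF y])
  have finS: "finite ?S" using NIy fin_Cross[OF y] by simp
  have inj: "inj ?yy"
  proof (rule injI)
    fix a b assume "?yy a = ?yy b"
    then show "a = b" by (simp add: aff_inj[OF y] prod_eq_iff)
  qed
  have Vimg: "V = ?yy ` ?S"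
  proof (rule set_eqI, rule iffI)
    fix x assume x: "x \<in> V"
    let ?v = "(inv y (fst x), inv y (snd x))"
    have e: "?yy ?v = x" by (simp add: aff_inv_f[OF y])
    have "?v \<in> ?S" using x by (simp add: V_def Cross_eq aff_inv_f[OF y])
    then show "x \<in> ?yy ` ?S" using e[symmetric] by (rule rev_image_eqI)
  next
    fix x assume "x \<in> ?yy ` ?S"
    then obtain v where v: "v \<in> ?S" "x = ?yy v" by blast
    then show "x \<in> V" by (simp add: V_def Cross_eq aff_inv_f[OF y])
  qed
  have cardV: "card V = card (nrm r (Cross n r lam mu y))"
    using NIy Vimg inj by (simp add: card_image inj_on_subset[of ?yy UNIV])
  have finV: "finite V" using Vimg finS by simp
  have AC: "?A i j = card (C y i j)" for i j by (rule jmath_C[OF y])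
  have Cne: "?A i j \<noteq> 0 \<longleftrightarrow> C y i j \<noteq> {}" for i j using AC[of i j] fin_C[of y i j] by simp
  let ?tup = "\<lambda>x. (rb (fst x), cb (inv y (fst x)), rb (snd x), cb (inv y (snd x)))"
  have VU: "V = (\<Union>t\<in>T. cp t)"
  proof (rule set_eqI, rule iffI)
    fix x assume x: "x \<in> V"
    have "?tup x \<in> T"
    proof -
      have h: "1 \<le> fst x" "fst x \<le> int r" "cb (inv y (fst x)) < cb (inv y (snd x))" "rb (snd x) \<le> rb (fst x)"
        using x by (auto simp: V_def)
      have "1 \<le> rb (fst x) \<and> rb (fst x) \<le> int n" using L.blk_range[of "fst x"] h(1,2) by blast
      moreover have "fst x \<in> C y (rb (fst x)) (cb (inv y (fst x)))" "snd x \<in> C y (rb (snd x)) (cb (inv y (snd x)))"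
        by (simp_all add: C_def)
      ultimately show ?thesis using h Cne by (auto simp: T_def)
    qed
    moreover have "x \<in> cp (?tup x)" by (simp add: cp_def C_def mem_Times_iff)
    ultimately show "x \<in> (\<Union>t\<in>T. cp t)" by blast
  next
    fix x assume "x \<in> (\<Union>t\<in>T. cp t)"
    then obtain i j k l where t: "(i, j, k, l) \<in> T" and xc: "x \<in> C y i j \<times> C y k l"
      by (auto simp: cp_def)
    have h: "1 \<le> i" "i \<le> int n" "k \<le> i" "j < l" using t by (auto simp: T_def)
    have e: "rb (fst x) = i" "cb (inv y (fst x)) = j" "rb (snd x) = k" "cb (inv y (snd x)) = l"
      using xc by (auto simp: C_def mem_Times_iff)
    have "1 \<le> fst x \<and> fst x \<le> int r" using L.blk_range[of "fst x"] e h by simp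
    then show "x \<in> V" using e h by (simp add: V_def)
  qed
  have finT: "finite T"
  proof -
    have "T \<subseteq> ?tup ` V"
    proof
      fix t assume t: "t \<in> T"
      obtain i j k l where tt: "t = (i, j, k, l)" by (cases t) auto
      have h: "C y i j \<noteq> {}" "C y k l \<noteq> {}" using t Cne by (auto simp: T_def tt)
      then obtain a b where ab: "a \<in> C y i j" "b \<in> C y k l" by blast
      have "(a, b) \<in> V" using VU t ab by (auto simp: cp_def tt)
      moreover have "?tup (a, b) = t" using ab by (simp add: C_def tt)
      ultimately show "t \<in> ?tup ` V" by (rule rev_image_eqI[where b=t, OF _ sym])
    qed
    then show ?thesis using finV by (rule finite_subset[OF _ finite_imageI])
  qed
  have fincp: "\<forall>t\<in>T. finite (cp t)" using fin_C by (auto simp: cp_def)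
  have disj: "\<forall>t\<in>T. \<forall>t'\<in>T. t \<noteq> t' \<longrightarrow> cp t \<inter> cp t' = {}"
  proof (intro ballI impI)
    fix t t' assume "t \<in> T" "t' \<in> T" "t \<noteq> t'"
    obtain i j k l where tt: "t = (i, j, k, l)" by (cases t) auto
    obtain i' j' k' l' where tt': "t' = (i', j', k', l')" by (cases t') auto
    show "cp t \<inter> cp t' = {}"
    proof (rule ccontr)
      assume "cp t \<inter> cp t' \<noteq> {}"
      then obtain x where "x \<in> cp t" "x \<in> cp t'" by blast
      then have "x \<in> C y i j \<times> C y k l" "x \<in> C y i' j' \<times> C y k' l'" by (simp_all add: cp_def tt tt')
      then have "i = i'" "j = j'" "k = k'" "l = l'" by (simp_all add: C_def mem_Times_iff)
      then have "t = t'" by (simp add: tt tt')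
      then show False using \<open>t \<noteq> t'\<close> by simp
    qed
  qed
  have "card V = (\<Sum>t\<in>T. card (cp t))" unfolding VU by (rule card_UN_disjoint[OF finT fincp disj])
  also have "\<dots> = (\<Sum>(i, j, k, l)\<in>T. ?A i j * ?A k l)"
    by (rule sum.cong) (auto simp: cp_def AC card_cartesian_product)
  also have "\<dots> = dA n ?A" by (simp add: dA_def T_def)
  finally show ?thesis using cardV by simp
qed

end

lemma Young_dcoset: "Young n r mu = dcoset n r mu id mu"
proof
  show "Young n r mu \<subseteq> dcoset n r mu id mu"
  proof
    fix w assume "w \<in> Young n r mu"
    moreover have "w = w \<circ> id \<circ> id" by simp
    ultimately show "w \<in> dcoset n r mu id mu" using young_id unfolding dcoset_def by blast
  qed
  show "dcoset n r mu id mu \<subseteq> Young n r mu"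
    by (auto simp: dcoset_def intro: young_comp)
qed

theorem lemma7p1:
  fixes n r :: nat and A :: amat and lam mu :: "int \<Rightarrow> nat" and y yplus w0 :: "int \<Rightarrow> int"
  assumes "n \<ge> 2" and "r \<ge> 1"
    and "A \<in> Theta_r n r"
    and "lam \<in> Lambda n r" and "mu \<in> Lambda n r"
    and "y \<in> Dpair n r lam mu"
    and "A = jmath n r lam y mu"
    and "longest_in r (dcoset n r lam y mu) yplus"
    and "longest_in r (Young n r mu) w0"
  shows "mu = co A \<and> len r yplus = dA n A + len r w0"
proof -
  interpret D1: dc n r lam mu using assms by unfold_locales auto
  interpret D2: dc n r mu mu using assms by unfold_locales auto
  have y: "y \<in> aff_sym r" using assms(6) by (simp add: Dpair_def Dmin_def)
  have l1: "len r yplus = card (nrm r (Same n r mu)) + card (nrm r (Cross n r lam mu y))"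
    by (rule D1.longest_len[OF y assms(8)])
  have "longest_in r (dcoset n r mu id mu) w0" using assms(9) Young_dcoset by metis
  then have l2: "len r w0 = card (nrm r (Same n r mu)) + card (nrm r (Cross n r mu mu id))"
    by (rule D2.longest_len[OF aff_id])
  have "Cross n r mu mu id = {}" by (auto simp: Cross_def)
  then have l2': "len r w0 = card (nrm r (Same n r mu))" using l2 by (simp add: nrm_def)
  have "card (nrm r (Cross n r lam mu y)) = dA n A" using D1.dA_Cross[OF y] assms(7) by simp
  moreover have "mu = co A" using D1.co_jmath[OF y] assms(7) by simp
  ultimately show ?thesis using l1 l2' by simp
qed

end
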